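(* On $\mathbb{N}^3$ let $A_n=\{(n+1,n,n),(n,n+1,n),(n,n,n+1)\}$ and $B_n=\{(n,n+1,n+1),(n+1,n,n+1),(n+1,n+1,n)\}$, and let $\mu$ be the probability measure with $\mu(x)=\frac{1}{(\pi n)^2}$ for $x\in A_n\cup B_n$ and $\mu(x)=0$ for $x\notin\bigcup_n(A_n\cup B_n)$. Put $\mu_{ij}=\mathrm{Pr}_{ij}(\mu)$ and let $c:\mathbb{N}^3\to\{0,1\}$ with $c=1$ on $\bigcup_nB_n$ and $c=0$ elsewhere. Then $\mu$ is the only probability measure on $\mathbb{N}^3$ with projections $\mu_{12},\mu_{13},\mu_{23}$ (hence it is the unique optimal plan), and there are no functions $f_{ij}:\mathbb{N}^2\to[-\infty,+\infty)$ such that $f_{12}(n_1,n_2)+f_{13}(n_1,n_3)+f_{23}(n_2,n_3)\le c(n_1,n_2,n_3)$ for all $(n_1,n_2,n_3)\in\mathbb{N}^3$ with equality $\mu$-almost everywhere. In particular $\mu$ is not strongly $c$-monotone.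
   Context: $\mathrm{Pr}_{ij}$ is the projection of $\mathbb{N}^3$ onto coordinates $(i,j)$. A plan $\pi$ is strongly $c$-monotone if it is concentrated on a Borel set $\Gamma$ for which there exist Borel functions $f_{ij}:X_i\times X_j\to[-\infty,+\infty)$ with $\sum f_{ij}\le c$ everywhere and equality on $\Gamma$. *)

theory Defs
  imports "HOL-Probability.Probability"
begin

type_synonym pt3 = "nat \<times> nat \<times> nat"

definition Aset :: "nat \<Rightarrow> pt3 set" where
  "Aset n = {(n+1, n, n), (n, n+1, n), (n, n, n+1)}"

definition Bset :: "nat \<Rightarrow> pt3 set" where
  "Bset n = {(n, n+1, n+1), (n+1, n, n+1), (n+1, n+1, n)}"

definition mu_fun :: "pt3 \<Rightarrow> real" where
  "mu_fun x = (if \<exists>n\<ge>1. x \<in> Aset n \<union> Bset n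
     then 1 / (pi * real (THE n. n \<ge> 1 \<and> x \<in> Aset n \<union> Bset n))^2 else 0)"

definition mu :: "pt3 pmf" where
  "mu = embed_pmf mu_fun"

definition pr12 :: "pt3 \<Rightarrow> nat \<times> nat" where "pr12 x = (case x of (a,b,d) \<Rightarrow> (a,b))"
definition pr13 :: "pt3 \<Rightarrow> nat \<times> nat" where "pr13 x = (case x of (a,b,d) \<Rightarrow> (a,d))"
definition pr23 :: "pt3 \<Rightarrow> nat \<times> nat" where "pr23 x = (case x of (a,b,d) \<Rightarrow> (b,d))"

definition cost :: "pt3 \<Rightarrow> ereal" where
  "cost x = (if \<exists>n\<ge>1. x \<in> Bset n then 1 else 0)"

definition strongly_c_monotone :: "(pt3 \<Rightarrow> ereal) \<Rightarrow> pt3 pmf \<Rightarrow> bool" where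
  "strongly_c_monotone c p \<longleftrightarrow>
     (\<exists>\<Gamma> (f12 :: nat \<times> nat \<Rightarrow> ereal) (f13 :: nat \<times> nat \<Rightarrow> ereal) (f23 :: nat \<times> nat \<Rightarrow> ereal).
        \<Gamma> \<in> sets (count_space UNIV) \<and> (AE x in measure_pmf p. x \<in> \<Gamma>) \<and>
        f12 \<in> borel_measurable (count_space UNIV) \<and>
        f13 \<in> borel_measurable (count_space UNIV) \<and>
        f23 \<in> borel_measurable (count_space UNIV) \<and>
        (\<forall>z. f12 z \<noteq> \<infinity> \<and> f13 z \<noteq> \<infinity> \<and> f23 z \<noteq> \<infinity>) \<and>
        (\<forall>a b d. f12 (a,b) + f13 (a,d) + f23 (b,d) \<le> c (a,b,d)) \<and>
        (\<forall>a b d. (a,b,d) \<in> \<Gamma> \<longrightarrow> f12 (a,b) + f13 (a,d) + f23 (b,d) = c (a,b,d)))"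

end

theory Submission
  imports Defs "HOL-Analysis.Analysis"
begin

definition pp :: "nat \<Rightarrow> real" where "pp k = 1 / (pi * real k)^2"

abbreviation AB :: "nat \<Rightarrow> pt3 set" where "AB k \<equiv> Aset k \<union> Bset k"

lemma AB_idx: "(a,b,c) \<in> AB k \<Longrightarrow> k = (a+b+c) div 3"
  unfolding Aset_def Bset_def by auto

lemma mu_val: "x \<in> AB k \<Longrightarrow> mu_fun x = pp k"
proof -
  assume x: "x \<in> AB k"
  obtain a b c where xe: "x = (a,b,c)" by (cases x) auto
  have uniq: "n = k" if "x \<in> AB n" for n
  proof -
    have "n = (a+b+c) div 3" using AB_idx that unfolding xe by blast
    moreover have "k = (a+b+c) div 3" using AB_idx x unfolding xe by blast
    ultimately show "n = k" by simp
  qed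
  show ?thesis
  proof (cases "k \<ge> 1")
    case True
    have the: "(THE n. n \<ge> 1 \<and> x \<in> AB n) = k"
    proof (rule the_equality)
      show "1 \<le> k \<and> x \<in> AB k" using True x by blast
      show "\<And>n. 1 \<le> n \<and> x \<in> AB n \<Longrightarrow> n = k" using uniq by blast
    qed
    have ex: "\<exists>n\<ge>1. x \<in> AB n" using True x by blast
    show ?thesis unfolding mu_fun_def pp_def by (subst if_P[OF ex]) (simp only: the)
  next
    case False
    have nex: "\<not> (\<exists>n\<ge>1. x \<in> AB n)" using uniq False by blast
    show ?thesis unfolding mu_fun_def pp_def by (subst if_not_P[OF nex]) (use False in simp)
  qed
qed

lemma mu_zero: "(\<forall>k. x \<notin> AB k) \<Longrightarrow> mu_fun x = 0"
  unfolding mu_fun_def by auto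

lemma pp_nonneg: "pp k \<ge> 0" unfolding pp_def by simp

lemma mu_fun_nonneg: "mu_fun x \<ge> 0"
proof (cases "\<exists>k. x \<in> AB k")
  case True
  then obtain k where "x \<in> AB k" by blast
  then show ?thesis using mu_val pp_nonneg by metis
qed (simp add: mu_zero)

lemma card_AB: "card (AB k) = 6"
  unfolding Aset_def Bset_def by auto

lemma mu_fun_sum: "ennreal (mu_fun x) = (\<Sum>k. ennreal (pp k) * indicator (AB k) x)"
proof (cases "\<exists>k. x \<in> AB k")
  case True
  then obtain m where m: "x \<in> AB m" by blast
  obtain a b c where xe: "x = (a,b,c)" by (cases x) auto
  have uniq: "n = m" if "x \<in> AB n" for n
  proof -
    have "n = (a+b+c) div 3" using AB_idx that unfolding xe by blast
    moreover have "m = (a+b+c) div 3" using AB_idx m unfolding xe by blast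
    ultimately show "n = m" by simp
  qed
  have "(\<Sum>k. ennreal (pp k) * indicator (AB k) x) = (\<Sum>k\<in>{m}. ennreal (pp k) * indicator (AB k) x)"
    by (rule suminf_finite) (use uniq in \<open>auto split: split_indicator\<close>)
  also have "\<dots> = ennreal (pp m)" using m by (subst sum.insert) (auto simp: indicator_def)
  finally show ?thesis using m mu_val[OF m] by simp
next
  case False
  then show ?thesis by (simp add: mu_zero)
qed

lemma basel6: "(\<lambda>k. 6 * pp k) sums 1"
proof -
  have "(\<lambda>n. 1 / real ((n + 1)\<^sup>2)) sums (pi\<^sup>2 / 6)" using inverse_squares_sums .
  then have "(\<lambda>n. (6 / pi\<^sup>2) * (1 / real ((n + 1)\<^sup>2))) sums ((6 / pi\<^sup>2) * (pi\<^sup>2 / 6))"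
    by (rule sums_mult)
  moreover have "\<And>n. 6 * pp (Suc n) = (6 / pi\<^sup>2) * (1 / real ((n + 1)\<^sup>2))"
    unfolding pp_def by (simp add: power_mult_distrib)
  ultimately have "(\<lambda>n. 6 * pp (Suc n)) sums 1" by simp
  then have "(\<lambda>k. 6 * pp k) sums (1 + 6 * pp 0)" by (subst sums_Suc_iff[symmetric])
  then show ?thesis by (simp add: pp_def)
qed

lemma mu_fun_total: "(\<integral>\<^sup>+x. mu_fun x \<partial>count_space UNIV) = 1"
proof -
  have "(\<integral>\<^sup>+x. mu_fun x \<partial>count_space UNIV)
      = (\<integral>\<^sup>+x. (\<Sum>k. ennreal (pp k) * indicator (AB k) x) \<partial>count_space UNIV)"
    by (simp add: mu_fun_sum)
  also have "\<dots> = (\<Sum>k. \<integral>\<^sup>+x. ennreal (pp k) * indicator (AB k) x \<partial>count_space UNIV)"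
    by (rule nn_integral_suminf) simp
  also have "\<dots> = (\<Sum>k. ennreal (6 * pp k))"
  proof (rule suminf_cong)
    fix k
    have "(\<integral>\<^sup>+x. ennreal (pp k) * indicator (AB k) x \<partial>count_space UNIV)
       = ennreal (pp k) * emeasure (count_space UNIV) (AB k)"
      by (rule nn_integral_cmult_indicator) simp
    also have "emeasure (count_space UNIV) (AB k) = 6"
      using card_AB[of k] by (subst emeasure_count_space_finite) (auto simp: Aset_def Bset_def)
    finally show "(\<integral>\<^sup>+x. ennreal (pp k) * indicator (AB k) x \<partial>count_space UNIV) = ennreal (6 * pp k)"
      by (simp add: ennreal_mult' pp_nonneg mult.commute)
  qed
  also have "\<dots> = ennreal 1"
    using basel6 by (intro suminf_ennreal_eq) (auto simp: pp_nonneg)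
  finally show ?thesis by simp
qed

lemma pmf_mu: "pmf mu x = mu_fun x"
  unfolding mu_def by (rule pmf_embed_pmf[OF mu_fun_nonneg mu_fun_total])

lemma pp_pos: "k \<ge> 1 \<Longrightarrow> pp k > 0" unfolding pp_def by simp

lemma in_set_mu: "x \<in> AB k \<Longrightarrow> k \<ge> 1 \<Longrightarrow> x \<in> set_pmf mu"
  using pp_pos[of k] by (simp add: set_pmf_iff pmf_mu mu_val)

lemma ereal3_fin:
  fixes a b c :: ereal
  assumes "a \<noteq> \<infinity>" "b \<noteq> \<infinity>" "c \<noteq> \<infinity>" "a + b + c = ereal r"
  shows "a = ereal (real_of_ereal a) \<and> b = ereal (real_of_ereal b) \<and> c = ereal (real_of_ereal c)
     \<and> real_of_ereal a + real_of_ereal b + real_of_ereal c = r"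
  using assms by (cases a; cases b; cases c) auto

lemma cost_A: "x \<in> Aset k \<Longrightarrow> cost x = 0"
  unfolding cost_def Aset_def Bset_def by auto

lemma cost_B: "x \<in> Bset k \<Longrightarrow> k \<ge> 1 \<Longrightarrow> cost x = 1"
  unfolding cost_def by auto

lemma cost_diag: "cost (k,k,k) = 0"
  unfolding cost_def Bset_def by auto

lemma no_f:
  fixes f12 f13 f23 :: "nat \<times> nat \<Rightarrow> ereal"
  assumes fin: "\<forall>z. f12 z \<noteq> \<infinity> \<and> f13 z \<noteq> \<infinity> \<and> f23 z \<noteq> \<infinity>"
    and le: "\<forall>a b d. f12 (a,b) + f13 (a,d) + f23 (b,d) \<le> cost (a,b,d)"
    and eq: "\<forall>x\<in>set_pmf mu. case x of (a,b,d) \<Rightarrow> f12 (a,b) + f13 (a,d) + f23 (b,d) = cost (a,b,d)"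
  shows False
proof -
  define F12 where "F12 z = real_of_ereal (f12 z)" for z
  define F13 where "F13 z = real_of_ereal (f13 z)" for z
  define F23 where "F23 z = real_of_ereal (f23 z)" for z
  have key: "f12 (a,b) = ereal (F12 (a,b)) \<and> f13 (a,d) = ereal (F13 (a,d)) \<and> f23 (b,d) = ereal (F23 (b,d))
     \<and> F12 (a,b) + F13 (a,d) + F23 (b,d) = r"
    if "(a,b,d) \<in> AB k" "k \<ge> 1" "cost (a,b,d) = ereal r" for a b d k r
  proof -
    have "f12 (a,b) + f13 (a,d) + f23 (b,d) = ereal r"
      using eq in_set_mu[OF that(1,2)] that(3) by auto
    then show ?thesis unfolding F12_def F13_def F23_def using fin ereal3_fin by blast
  qed
  have eA: "F12 (a,b) + F13 (a,d) + F23 (b,d) = 0" if "(a,b,d) \<in> Aset k" "k \<ge> 1" for a b d k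
    using key[of a b d k 0] that cost_A[OF that(1)] by (simp add: zero_ereal_def)
  have eB: "F12 (a,b) + F13 (a,d) + F23 (b,d) = 1" if "(a,b,d) \<in> Bset k" "k \<ge> 1" for a b d k
    using key[of a b d k 1] that cost_B[OF that(1,2)] by (simp add: one_ereal_def)
  define D where "D k = F12 (k,k) + F13 (k,k) + F23 (k,k)" for k
  have step: "D (Suc k) = D k + 3" if "k \<ge> 1" for k
  proof -
    have "F12 (k+1,k) + F13 (k+1,k) + F23 (k,k) = 0" by (rule eA[of _ _ _ k]) (use that in \<open>auto simp: Aset_def\<close>)
    moreover have "F12 (k,k+1) + F13 (k,k) + F23 (k+1,k) = 0" by (rule eA[of _ _ _ k]) (use that in \<open>auto simp: Aset_def\<close>)
    moreover have "F12 (k,k) + F13 (k,k+1) + F23 (k,k+1) = 0" by (rule eA[of _ _ _ k]) (use that in \<open>auto simp: Aset_def\<close>)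
    moreover have "F12 (k,k+1) + F13 (k,k+1) + F23 (k+1,k+1) = 1" by (rule eB[of _ _ _ k]) (use that in \<open>auto simp: Bset_def\<close>)
    moreover have "F12 (k+1,k) + F13 (k+1,k+1) + F23 (k,k+1) = 1" by (rule eB[of _ _ _ k]) (use that in \<open>auto simp: Bset_def\<close>)
    moreover have "F12 (k+1,k+1) + F13 (k+1,k) + F23 (k+1,k) = 1" by (rule eB[of _ _ _ k]) (use that in \<open>auto simp: Bset_def\<close>)
    ultimately show ?thesis unfolding D_def by simp
  qed
  have Dle: "D k \<le> 0" if "k \<ge> 1" for k
  proof -
    have "(k,k,k+1) \<in> AB k" by (simp add: Aset_def)
    from key[OF this that, of 0] cost_A[of "(k,k,k+1)" k]
    have 1: "f12 (k,k) = ereal (F12 (k,k)) \<and> f13 (k,k+1) = ereal (F13 (k,k+1))"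
      by (simp add: Aset_def zero_ereal_def)
    have "(k+1,k,k) \<in> AB k" by (simp add: Aset_def)
    from key[OF this that, of 0] cost_A[of "(k+1,k,k)" k]
    have 2: "f23 (k,k) = ereal (F23 (k,k))"
      by (simp add: Aset_def zero_ereal_def)
    have "(k,k+1,k) \<in> AB k" by (simp add: Aset_def)
    from key[OF this that, of 0] cost_A[of "(k,k+1,k)" k]
    have 3: "f13 (k,k) = ereal (F13 (k,k))"
      by (simp add: Aset_def zero_ereal_def)
    have "f12 (k,k) + f13 (k,k) + f23 (k,k) \<le> 0" using le cost_diag[of k] by metis
    then have "ereal (F12 (k,k) + F13 (k,k) + F23 (k,k)) \<le> 0" using 1 2 3 by simp
    then show ?thesis unfolding D_def by (simp add: zero_ereal_def)
  qed
  have Dform: "D (Suc k) = D 1 + 3 * real k" for k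
  proof (induction k)
    case (Suc k)
    then show ?case using step[of "Suc k"] by simp
  qed simp
  define n where "n = nat (ceiling (- D 1))"
  have "real n \<ge> - D 1" unfolding n_def by linarith
  then have "D (Suc (Suc n)) > 0" using Dform[of "Suc n"] Dle[of 1] by simp
  then show False using Dle[of "Suc (Suc n)"] by simp
qed

definition pok :: "nat \<times> nat \<Rightarrow> bool" where
  "pok z = (case z of (a,b) \<Rightarrow> 1 \<le> a \<and> 1 \<le> b \<and> a \<le> b + 1 \<and> b \<le> a + 1)"

definition TT :: "pt3 set" where
  "TT = {x. pok (pr12 x) \<and> pok (pr13 x) \<and> pok (pr23 x)}"

lemma AB_pok: "x \<in> AB k \<Longrightarrow> k \<ge> 1 \<Longrightarrow> pok (pr12 x) \<and> pok (pr13 x) \<and> pok (pr23 x)"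
  unfolding Aset_def Bset_def pok_def pr12_def pr13_def pr23_def by auto

lemma set_mu_AB: "x \<in> set_pmf mu \<Longrightarrow> \<exists>k\<ge>1. x \<in> AB k"
proof -
  assume "x \<in> set_pmf mu"
  then have "mu_fun x \<noteq> 0" by (simp add: set_pmf_iff pmf_mu)
  show ?thesis
  proof (rule ccontr)
    assume "\<not> ?thesis"
    then have "mu_fun x = 0" unfolding mu_fun_def by (rule if_not_P)
    then show False using \<open>mu_fun x \<noteq> 0\<close> by simp
  qed
qed

lemma pok_mu:
  assumes "y \<in> set_pmf mu"
  shows "pok (pr12 y) \<and> pok (pr13 y) \<and> pok (pr23 y)"
proof -
  obtain k where "k \<ge> 1" "y \<in> AB k" using set_mu_AB[OF assms] by blast
  then show ?thesis using AB_pok by blast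
qed

lemma set_mu_T: "set_pmf mu \<subseteq> TT"
  using set_mu_AB AB_pok unfolding TT_def by blast

lemma set_nu_T:
  assumes m12: "map_pmf pr12 \<nu> = map_pmf pr12 mu" and m13: "map_pmf pr13 \<nu> = map_pmf pr13 mu"
    and m23: "map_pmf pr23 \<nu> = map_pmf pr23 mu"
  shows "set_pmf \<nu> \<subseteq> TT"
proof
  fix x assume x: "x \<in> set_pmf \<nu>"
  have "pr12 x \<in> pr12 ` set_pmf mu" using x arg_cong[OF m12, of set_pmf] by auto
  then obtain y where "y \<in> set_pmf mu" "pr12 x = pr12 y" by blast
  then have 1: "pok (pr12 x)" using pok_mu by metis
  have "pr13 x \<in> pr13 ` set_pmf mu" using x arg_cong[OF m13, of set_pmf] by auto
  then obtain y where "y \<in> set_pmf mu" "pr13 x = pr13 y" by blast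
  then have 2: "pok (pr13 x)" using pok_mu by metis
  have "pr23 x \<in> pr23 ` set_pmf mu" using x arg_cong[OF m23, of set_pmf] by auto
  then obtain y where "y \<in> set_pmf mu" "pr23 x = pr23 y" by blast
  then have 3: "pok (pr23 x)" using pok_mu by metis
  show "x \<in> TT" using \<open>pok (pr12 x)\<close> \<open>pok (pr13 x)\<close> \<open>pok (pr23 x)\<close> unfolding TT_def by simp
qed

lemma fiber:
  assumes "set_pmf q \<inter> f -` {z} \<subseteq> F" "F \<subseteq> f -` {z}" "finite F"
  shows "pmf (map_pmf f q) z = sum (pmf q) F"
proof -
  have "pmf (map_pmf f q) z = measure q (f -` {z})" by (rule pmf_map)
  also have "\<dots> = measure q F"
  proof (rule antisym)
    have "measure q (f -` {z}) = measure q (f -` {z} \<inter> set_pmf q)" by (simp add: measure_Int_set_pmf)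
    also have "\<dots> \<le> measure q F" using assms(1) by (intro measure_pmf.finite_measure_mono) auto
    finally show "measure q (f -` {z}) \<le> measure q F" .
    show "measure q F \<le> measure q (f -` {z})" using assms(2) by (intro measure_pmf.finite_measure_mono) auto
  qed
  also have "\<dots> = sum (pmf q) F" using assms(3) by (rule measure_measure_pmf_finite)
  finally show ?thesis .
qed

lemma TT_D: "(a,b,c) \<in> TT \<Longrightarrow> 1\<le>a \<and> 1\<le>b \<and> 1\<le>c \<and> a\<le>b+1 \<and> b\<le>a+1 \<and> a\<le>c+1 \<and> c\<le>a+1 \<and> b\<le>c+1 \<and> c\<le>b+1"
  unfolding TT_def pok_def pr12_def pr13_def pr23_def by simp

lemma fib_sub:
  assumes T: "set_pmf q \<subseteq> TT" and H: "\<And>a b c. (a,b,c) \<in> TT \<Longrightarrow> f (a,b,c) = z \<Longrightarrow> (a,b,c) \<in> F"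
  shows "set_pmf q \<inter> f -` {z} \<subseteq> F"
proof
  fix x assume "x \<in> set_pmf q \<inter> f -` {z}"
  moreover obtain a b c where "x = (a,b,c)" by (cases x) auto
  ultimately show "x \<in> F" using H T by blast
qed

lemma marg_eqs:
  assumes T: "set_pmf q \<subseteq> TT"
  shows "pmf (map_pmf pr12 q) (k+1,k) = pmf q (k+1,k,k) + pmf q (k+1,k,k+1)"
    "pmf (map_pmf pr12 q) (k,k+1) = pmf q (k,k+1,k) + pmf q (k,k+1,k+1)"
    "pmf (map_pmf pr13 q) (k+1,k) = pmf q (k+1,k,k) + pmf q (k+1,k+1,k)"
    "pmf (map_pmf pr13 q) (k,k+1) = pmf q (k,k,k+1) + pmf q (k,k+1,k+1)"
    "pmf (map_pmf pr23 q) (k+1,k) = pmf q (k,k+1,k) + pmf q (k+1,k+1,k)"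
    "pmf (map_pmf pr23 q) (k,k+1) = pmf q (k,k,k+1) + pmf q (k+1,k,k+1)"
    "pmf (map_pmf pr12 q) (k+1,k+1) = pmf q (k+1,k+1,k) + pmf q (k+1,k+1,k+1) + pmf q (k+1,k+1,k+2)"
proof -
  have "pmf (map_pmf pr12 q) (k+1,k) = sum (pmf q) {(k+1,k,k),(k+1,k,k+1)}"
  proof (rule fiber[OF fib_sub[OF T]])
    fix a b c assume "(a,b,c) \<in> TT" "pr12 (a,b,c) = (k+1,k)"
    then show "(a,b,c) \<in> {(k+1,k,k),(k+1,k,k+1)}" using TT_D[of a b c] unfolding pr12_def
      by (cases "c = k") auto
  qed (auto simp: pr12_def)
  then show "pmf (map_pmf pr12 q) (k+1,k) = pmf q (k+1,k,k) + pmf q (k+1,k,k+1)" by simp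
  have "pmf (map_pmf pr12 q) (k,k+1) = sum (pmf q) {(k,k+1,k),(k,k+1,k+1)}"
  proof (rule fiber[OF fib_sub[OF T]])
    fix a b c assume "(a,b,c) \<in> TT" "pr12 (a,b,c) = (k,k+1)"
    then show "(a,b,c) \<in> {(k,k+1,k),(k,k+1,k+1)}" using TT_D[of a b c] unfolding pr12_def
      by (cases "c = k") auto
  qed (auto simp: pr12_def)
  then show "pmf (map_pmf pr12 q) (k,k+1) = pmf q (k,k+1,k) + pmf q (k,k+1,k+1)" by simp
  have "pmf (map_pmf pr13 q) (k+1,k) = sum (pmf q) {(k+1,k,k),(k+1,k+1,k)}"
  proof (rule fiber[OF fib_sub[OF T]])
    fix a b c assume "(a,b,c) \<in> TT" "pr13 (a,b,c) = (k+1,k)"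
    then show "(a,b,c) \<in> {(k+1,k,k),(k+1,k+1,k)}" using TT_D[of a b c] unfolding pr13_def
      by (cases "b = k") auto
  qed (auto simp: pr13_def)
  then show "pmf (map_pmf pr13 q) (k+1,k) = pmf q (k+1,k,k) + pmf q (k+1,k+1,k)" by simp
  have "pmf (map_pmf pr13 q) (k,k+1) = sum (pmf q) {(k,k,k+1),(k,k+1,k+1)}"
  proof (rule fiber[OF fib_sub[OF T]])
    fix a b c assume "(a,b,c) \<in> TT" "pr13 (a,b,c) = (k,k+1)"
    then show "(a,b,c) \<in> {(k,k,k+1),(k,k+1,k+1)}" using TT_D[of a b c] unfolding pr13_def
      by (cases "b = k") auto
  qed (auto simp: pr13_def)
  then show "pmf (map_pmf pr13 q) (k,k+1) = pmf q (k,k,k+1) + pmf q (k,k+1,k+1)" by simp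
  have "pmf (map_pmf pr23 q) (k+1,k) = sum (pmf q) {(k,k+1,k),(k+1,k+1,k)}"
  proof (rule fiber[OF fib_sub[OF T]])
    fix a b c assume "(a,b,c) \<in> TT" "pr23 (a,b,c) = (k+1,k)"
    then show "(a,b,c) \<in> {(k,k+1,k),(k+1,k+1,k)}" using TT_D[of a b c] unfolding pr23_def
      by (cases "a = k") auto
  qed (auto simp: pr23_def)
  then show "pmf (map_pmf pr23 q) (k+1,k) = pmf q (k,k+1,k) + pmf q (k+1,k+1,k)" by simp
  have "pmf (map_pmf pr23 q) (k,k+1) = sum (pmf q) {(k,k,k+1),(k+1,k,k+1)}"
  proof (rule fiber[OF fib_sub[OF T]])
    fix a b c assume "(a,b,c) \<in> TT" "pr23 (a,b,c) = (k,k+1)"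
    then show "(a,b,c) \<in> {(k,k,k+1),(k+1,k,k+1)}" using TT_D[of a b c] unfolding pr23_def
      by (cases "a = k") auto
  qed (auto simp: pr23_def)
  then show "pmf (map_pmf pr23 q) (k,k+1) = pmf q (k,k,k+1) + pmf q (k+1,k,k+1)" by simp
  have "pmf (map_pmf pr12 q) (k+1,k+1) = sum (pmf q) {(k+1,k+1,k),(k+1,k+1,k+1),(k+1,k+1,k+2)}"
  proof (rule fiber[OF fib_sub[OF T]])
    fix a b c assume "(a,b,c) \<in> TT" "pr12 (a,b,c) = (k+1,k+1)"
    then show "(a,b,c) \<in> {(k+1,k+1,k),(k+1,k+1,k+1),(k+1,k+1,k+2)}" using TT_D[of a b c] unfolding pr12_def
      by (cases "c = k"; cases "c = k+1") auto
  qed (auto simp: pr12_def)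
  then show "pmf (map_pmf pr12 q) (k+1,k+1) = pmf q (k+1,k+1,k) + pmf q (k+1,k+1,k+1) + pmf q (k+1,k+1,k+2)" by simp
qed

definition OffD :: "(nat \<times> nat) set" where "OffD = {z. fst z \<noteq> snd z}"
definition Dg :: "pt3 set" where "Dg = {x. pr12 x \<notin> OffD \<and> pr23 x \<notin> OffD}"

lemma ind_pt:
  assumes "x \<in> TT"
  shows "indicator (pr12 -` OffD) x + indicator (pr13 -` OffD) x + indicator (pr23 -` OffD) x
       = (2::real) - 2 * indicator Dg x"
  using assms unfolding TT_def Dg_def OffD_def pok_def pr12_def pr13_def pr23_def indicator_def
  by (cases x) auto

lemma mass:
  assumes T: "set_pmf q \<subseteq> TT"
  shows "measure q (pr12 -` OffD) + measure q (pr13 -` OffD) + measure q (pr23 -` OffD) = 2 - 2 * measure q Dg"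
proof -
  have int: "\<And>A. integrable (measure_pmf q) (indicator A :: _ \<Rightarrow> real)"
    by (simp add: integrable_indicator_iff measure_pmf.emeasure_finite less_top[symmetric])
  have "measure q (pr12 -` OffD) + measure q (pr13 -` OffD) + measure q (pr23 -` OffD)
     = integral\<^sup>L q (\<lambda>x. indicator (pr12 -` OffD) x + indicator (pr13 -` OffD) x + indicator (pr23 -` OffD) x)"
    by (simp add: int)
  also have "\<dots> = integral\<^sup>L q (\<lambda>x. (2::real) - 2 * indicator Dg x)"
    by (rule integral_cong_AE) (use T ind_pt in \<open>auto simp: AE_measure_pmf_iff\<close>)
  also have "\<dots> = 2 - 2 * measure q Dg"
    by (simp add: int)
  finally show ?thesis .
qed

lemma diag_notin: "(m,m,m) \<notin> AB k"
  unfolding Aset_def Bset_def by auto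

lemma unique:
  assumes m12: "map_pmf pr12 \<nu> = map_pmf pr12 mu" and m13: "map_pmf pr13 \<nu> = map_pmf pr13 mu"
    and m23: "map_pmf pr23 \<nu> = map_pmf pr23 mu"
  shows "\<nu> = mu"
proof -
  have Tn: "set_pmf \<nu> \<subseteq> TT" using set_nu_T[OF assms] .
  have "measure mu Dg = 0"
    using set_mu_AB diag_notin by (subst measure_pmf_zero_iff) (fastforce simp: Dg_def OffD_def pr12_def pr23_def)
  moreover have "measure \<nu> (pr12 -` OffD) = measure mu (pr12 -` OffD)"
    using arg_cong[OF m12, of "\<lambda>p. measure p OffD"] by simp
  moreover have "measure \<nu> (pr13 -` OffD) = measure mu (pr13 -` OffD)"
    using arg_cong[OF m13, of "\<lambda>p. measure p OffD"] by simp
  moreover have "measure \<nu> (pr23 -` OffD) = measure mu (pr23 -` OffD)"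
    using arg_cong[OF m23, of "\<lambda>p. measure p OffD"] by simp
  ultimately have "measure \<nu> Dg = 0" using mass[OF Tn] mass[OF set_mu_T] by linarith
  then have dg0: "set_pmf \<nu> \<inter> Dg = {}" by (simp add: measure_pmf_zero_iff)
  have d0: "pmf \<nu> (m,m,m) = 0" for m
    using dg0 by (auto simp: set_pmf_iff Dg_def OffD_def pr12_def pr23_def)
  have d0mu: "pmf mu (m,m,m) = 0" for m
    using diag_notin by (simp add: pmf_mu mu_zero)
  have muv: "pmf mu x = pp k" if "x \<in> AB k" for x k using that by (simp add: pmf_mu mu_val)
  note E = marg_eqs[OF Tn] marg_eqs[OF set_mu_T]
  have off: "pmf \<nu> (k+1,k,k) + pmf \<nu> (k+1,k,k+1) = 2 * pp k \<and>
     pmf \<nu> (k,k+1,k) + pmf \<nu> (k,k+1,k+1) = 2 * pp k \<and>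
     pmf \<nu> (k+1,k,k) + pmf \<nu> (k+1,k+1,k) = 2 * pp k \<and>
     pmf \<nu> (k,k,k+1) + pmf \<nu> (k,k+1,k+1) = 2 * pp k \<and>
     pmf \<nu> (k,k+1,k) + pmf \<nu> (k+1,k+1,k) = 2 * pp k \<and>
     pmf \<nu> (k,k,k+1) + pmf \<nu> (k+1,k,k+1) = 2 * pp k \<and>
     pmf \<nu> (k+1,k+1,k) + pmf \<nu> (k+1,k+1,k+2) = pp k + pp (k+1)" for k
  proof -
    have v: "pmf mu (k+1,k,k) = pp k" "pmf mu (k,k+1,k) = pp k" "pmf mu (k,k,k+1) = pp k"
       "pmf mu (k,k+1,k+1) = pp k" "pmf mu (k+1,k,k+1) = pp k" "pmf mu (k+1,k+1,k) = pp k"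
       "pmf mu (k+1,k+1,k+2) = pp (k+1)"
      by (rule muv; simp add: Aset_def Bset_def)+
    show ?thesis using E[of k] v m12 m13 m23 d0[of "k+1"] d0mu[of "k+1"] by simp
  qed
  have beta: "pmf \<nu> (k,k+1,k+1) = pp k" for k
  proof (induction k)
    case 0
    have "(0,1,1) \<notin> set_pmf \<nu>" using Tn by (auto simp: TT_def pok_def pr12_def)
    then show ?case by (simp add: set_pmf_iff pp_def)
  next
    case (Suc k)
    from off[of k] Suc off[of "Suc k"] show ?case by (simp add: algebra_simps)
  qed
  have all: "pmf \<nu> x = pmf mu x" for x
  proof (cases "x \<in> TT")
    case False
    then have "x \<notin> set_pmf \<nu>" "x \<notin> set_pmf mu" using Tn set_mu_T by auto
    then show ?thesis by (simp add: set_pmf_iff)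
  next
    case True
    obtain a b c where xe: "x = (a,b,c)" by (cases x) auto
    define k where "k = min a (min b c)"
    have "x \<in> {(k,k,k),(k+1,k,k),(k,k+1,k),(k,k,k+1),(k,k+1,k+1),(k+1,k,k+1),(k+1,k+1,k)}"
      using True unfolding xe k_def TT_def pok_def pr12_def pr13_def pr23_def by (auto simp: min_def)
    moreover have "pmf \<nu> y = pp k \<and> pmf mu y = pp k" if "y \<in> AB k" "y \<in> {(k+1,k,k),(k,k+1,k),(k,k,k+1),(k,k+1,k+1),(k+1,k,k+1),(k+1,k+1,k)}" for y
      using that muv[OF that(1)] off[of k] beta[of k] by auto
    ultimately show ?thesis using d0 d0mu by (auto simp: Aset_def Bset_def)
  qed
  show ?thesis by (rule pmf_eqI) (rule all)
qed

theorem mainTheorem14: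
  shows "(\<forall>x. pmf mu x = mu_fun x) \<and>
    (\<forall>\<nu> :: pt3 pmf. map_pmf pr12 \<nu> = map_pmf pr12 mu \<and> map_pmf pr13 \<nu> = map_pmf pr13 mu
        \<and> map_pmf pr23 \<nu> = map_pmf pr23 mu \<longrightarrow> \<nu> = mu) \<and>
    \<not> (\<exists>(f12 :: nat \<times> nat \<Rightarrow> ereal) (f13 :: nat \<times> nat \<Rightarrow> ereal) (f23 :: nat \<times> nat \<Rightarrow> ereal).
        (\<forall>z. f12 z \<noteq> \<infinity> \<and> f13 z \<noteq> \<infinity> \<and> f23 z \<noteq> \<infinity>) \<and>
        (\<forall>a b d. f12 (a,b) + f13 (a,d) + f23 (b,d) \<le> cost (a,b,d)) \<and>
        (AE x in measure_pmf mu. case x of (a,b,d) \<Rightarrow> f12 (a,b) + f13 (a,d) + f23 (b,d) = cost (a,b,d))) \<and>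
    \<not> strongly_c_monotone cost mu"
proof (intro conjI allI impI)
  show "pmf mu x = mu_fun x" for x by (rule pmf_mu)
  show "\<nu> = mu" if "map_pmf pr12 \<nu> = map_pmf pr12 mu \<and> map_pmf pr13 \<nu> = map_pmf pr13 mu
        \<and> map_pmf pr23 \<nu> = map_pmf pr23 mu" for \<nu>
    using unique that by blast
  show "\<not> (\<exists>(f12 :: nat \<times> nat \<Rightarrow> ereal) (f13 :: nat \<times> nat \<Rightarrow> ereal) (f23 :: nat \<times> nat \<Rightarrow> ereal).
        (\<forall>z. f12 z \<noteq> \<infinity> \<and> f13 z \<noteq> \<infinity> \<and> f23 z \<noteq> \<infinity>) \<and>
        (\<forall>a b d. f12 (a,b) + f13 (a,d) + f23 (b,d) \<le> cost (a,b,d)) \<and>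
        (AE x in measure_pmf mu. case x of (a,b,d) \<Rightarrow> f12 (a,b) + f13 (a,d) + f23 (b,d) = cost (a,b,d)))"
  proof
    assume "\<exists>(f12 :: nat \<times> nat \<Rightarrow> ereal) (f13 :: nat \<times> nat \<Rightarrow> ereal) (f23 :: nat \<times> nat \<Rightarrow> ereal).
        (\<forall>z. f12 z \<noteq> \<infinity> \<and> f13 z \<noteq> \<infinity> \<and> f23 z \<noteq> \<infinity>) \<and>
        (\<forall>a b d. f12 (a,b) + f13 (a,d) + f23 (b,d) \<le> cost (a,b,d)) \<and>
        (AE x in measure_pmf mu. case x of (a,b,d) \<Rightarrow> f12 (a,b) + f13 (a,d) + f23 (b,d) = cost (a,b,d))"
    then obtain f12 f13 f23 :: "nat \<times> nat \<Rightarrow> ereal" where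
      fin: "\<forall>z. f12 z \<noteq> \<infinity> \<and> f13 z \<noteq> \<infinity> \<and> f23 z \<noteq> \<infinity>"
      and le: "\<forall>a b d. f12 (a,b) + f13 (a,d) + f23 (b,d) \<le> cost (a,b,d)"
      and ae: "AE x in measure_pmf mu. case x of (a,b,d) \<Rightarrow> f12 (a,b) + f13 (a,d) + f23 (b,d) = cost (a,b,d)"
      by blast
    from ae have "\<forall>x\<in>set_pmf mu. case x of (a,b,d) \<Rightarrow> f12 (a,b) + f13 (a,d) + f23 (b,d) = cost (a,b,d)"
      by (simp add: AE_measure_pmf_iff)
    then show False using no_f[OF fin le] by blast
  qed
  show "\<not> strongly_c_monotone cost mu"
  proof
    assume "strongly_c_monotone cost mu"
    then obtain G f12 f13 f23 where
      G: "AE x in measure_pmf mu. x \<in> G"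
      and fin: "\<forall>z. f12 z \<noteq> \<infinity> \<and> f13 z \<noteq> \<infinity> \<and> f23 z \<noteq> \<infinity>"
      and le: "\<forall>a b d. f12 (a,b) + f13 (a,d) + f23 (b,d) \<le> cost (a,b,d)"
      and eq: "\<forall>a b d. (a,b,d) \<in> G \<longrightarrow> f12 (a,b) + f13 (a,d) + f23 (b,d) = cost (a,b,d)"
      unfolding strongly_c_monotone_def by blast
    have "\<forall>x\<in>set_pmf mu. case x of (a,b,d) \<Rightarrow> f12 (a,b) + f13 (a,d) + f23 (b,d) = cost (a,b,d)"
      using G eq by (auto simp: AE_measure_pmf_iff)
    then show False using no_f[OF fin le] by blast
  qed
qed

end
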